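(* Let $(E,\mathcal L)$ be a simple COM with tope set $\mathcal T$ and tope graph $G$. Then $$\mathcal L=\{X(G')\mid G'\text{ antipodal subgraph of }G\}=\{X(G')\mid G'\text{ antipodal gated subgraph of }G\}=\mathcal L(G),$$ where $\mathcal L(G)=\{X\in\{+,-,0\}^E\mid X\circ(-Y)\in\mathcal T\text{ for all }Y\in\mathcal T\}$. In particular, in the tope graph of a COM all antipodal subgraphs are gated.
   Context: Sign vectors: $E$ finite nonempty, $\emptyset\ne\mathcal L\subseteq\{+,-,0\}^E$; $S(X,Y)=\{e:X_eY_e=-\}$; $(X\circ Y)_e=X_e$ if $X_e\ne0$ else $Y_e$; $(-X)_e=-X_e$. (FS): $X\circ-Y\in\mathcal L$ for all $X,Y\in\mathcal L$. (SE): for $X,Y\in\mathcal L$, $e\in S(X,Y)$ there is $Z\in\mathcal L$ with $Z_e=0$ and $Z_f=(X\circ Y)_f$ for $f\notin S(X,Y)$. A COM satisfies (FS) and (SE). Simple: each coordinate takes all values $+,-,0$ on $\mathcal L$, and for $e\neq f$ there are $X,Y\in\mathcal L$ with $\{X_eX_f,Y_eY_f\}=\{+,-\}$. Topes $\mathcal T=\mathcal L\cap\{+,-\}^E$; the tope graph is the subgraph of the hypercube on $\{+,-\}^E$ induced by $\mathcal T$. For a simple COM the tope graph is an isometric subgraph (partial cube) whose $\Theta$-classes are indexed by $E$: the class of $e$ consists of the edges joining topes that differ exactly in coordinate $e$, and its halfspaces are the topes with $e$-coordinate $+$ resp. $-$. For a convex subgraph $G'$ of $G$, $X(G')\in\{+,-,0\}^E$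 has $X(G')_e=+$ (resp. $-$) if all vertices of $G'$ have $e$-coordinate $+$ (resp. $-$), and $0$ otherwise. A subgraph is convex if it contains all shortest paths between its vertices; $\mathrm{conv}(S)$ is the smallest convex subgraph containing $S$. For a subgraph $H$ and $x\in H$, $-_Hx\in H$ with $\mathrm{conv}(x,-_Hx)=H$ is the antipode of $x$ in $H$; $H$ is antipodal if every vertex has an antipode in $H$. $H$ is gated if for every vertex $x$ of $G$ there is $x'\in H$ such that for every $y\in H$ some shortest $x$–$y$ path passes through $x'$. *)

theory Defs
  imports Main
begin

datatype sign = Pos | Neg | Zero

fun sign_mult :: "sign \<Rightarrow> sign \<Rightarrow> sign" where
  "sign_mult Zero _ = Zero"
| "sign_mult _ Zero = Zero"
| "sign_mult Pos Pos = Pos"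
| "sign_mult Neg Neg = Pos"
| "sign_mult Pos Neg = Neg"
| "sign_mult Neg Pos = Neg"

fun sign_neg :: "sign \<Rightarrow> sign" where
  "sign_neg Pos = Neg" | "sign_neg Neg = Pos" | "sign_neg Zero = Zero"

definition signvectors :: "'e set \<Rightarrow> ('e \<Rightarrow> sign) set" where
  "signvectors E = {X. \<forall>e. e \<notin> E \<longrightarrow> X e = Zero}"

definition sep :: "'e set \<Rightarrow> ('e \<Rightarrow> sign) \<Rightarrow> ('e \<Rightarrow> sign) \<Rightarrow> 'e set" where
  "sep E X Y = {e \<in> E. sign_mult (X e) (Y e) = Neg}"

definition comp :: "('e \<Rightarrow> sign) \<Rightarrow> ('e \<Rightarrow> sign) \<Rightarrow> ('e \<Rightarrow> sign)" where
  "comp X Y = (\<lambda>e. if X e \<noteq> Zero then X e else Y e)"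

definition negv :: "('e \<Rightarrow> sign) \<Rightarrow> ('e \<Rightarrow> sign)" where
  "negv X = (\<lambda>e. sign_neg (X e))"

definition face_symmetry :: "'e set \<Rightarrow> ('e \<Rightarrow> sign) set \<Rightarrow> bool" where
  "face_symmetry E L \<longleftrightarrow> (\<forall>X\<in>L. \<forall>Y\<in>L. comp X (negv Y) \<in> L)"

definition strong_elimination :: "'e set \<Rightarrow> ('e \<Rightarrow> sign) set \<Rightarrow> bool" where
  "strong_elimination E L \<longleftrightarrow>
     (\<forall>X\<in>L. \<forall>Y\<in>L. \<forall>e\<in>sep E X Y. \<exists>Z\<in>L. Z e = Zero \<and>
        (\<forall>f\<in>E - sep E X Y. Z f = comp X Y f))"

definition COM :: "'e set \<Rightarrow> ('e \<Rightarrow> sign) set \<Rightarrow> bool" where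
  "COM E L \<longleftrightarrow> face_symmetry E L \<and> strong_elimination E L"

definition simple_svs :: "'e set \<Rightarrow> ('e \<Rightarrow> sign) set \<Rightarrow> bool" where
  "simple_svs E L \<longleftrightarrow>
     (\<forall>e\<in>E. \<forall>s. \<exists>X\<in>L. X e = s) \<and>
     (\<forall>e\<in>E. \<forall>f\<in>E. e \<noteq> f \<longrightarrow>
        (\<exists>X\<in>L. \<exists>Y\<in>L. {sign_mult (X e) (X f), sign_mult (Y e) (Y f)} = {Pos, Neg}))"

definition topes :: "'e set \<Rightarrow> ('e \<Rightarrow> sign) set \<Rightarrow> ('e \<Rightarrow> sign) set" where
  "topes E L = {X \<in> L. \<forall>e\<in>E. X e \<noteq> Zero}"

text \<open>Tope graph: induced subgraph of the hypercube on the tope set T;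
  two topes are adjacent iff they differ in exactly one coordinate.\<close>
definition tadj :: "('e \<Rightarrow> sign) set \<Rightarrow> ('e \<Rightarrow> sign) \<Rightarrow> ('e \<Rightarrow> sign) \<Rightarrow> bool" where
  "tadj T x y \<longleftrightarrow> x \<in> T \<and> y \<in> T \<and> card {e. x e \<noteq> y e} = 1"

definition walk_betw :: "('e \<Rightarrow> sign) set \<Rightarrow> ('e \<Rightarrow> sign) \<Rightarrow> ('e \<Rightarrow> sign)
    \<Rightarrow> ('e \<Rightarrow> sign) list \<Rightarrow> bool" where
  "walk_betw T x y p \<longleftrightarrow> p \<noteq> [] \<and> set p \<subseteq> T \<and> hd p = x \<and> last p = y \<and>
     (\<forall>i. Suc i < length p \<longrightarrow> tadj T (p ! i) (p ! Suc i))"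

definition shortest_path :: "('e \<Rightarrow> sign) set \<Rightarrow> ('e \<Rightarrow> sign) \<Rightarrow> ('e \<Rightarrow> sign)
    \<Rightarrow> ('e \<Rightarrow> sign) list \<Rightarrow> bool" where
  "shortest_path T x y p \<longleftrightarrow> walk_betw T x y p \<and>
     (\<forall>q. walk_betw T x y q \<longrightarrow> length p \<le> length q)"

text \<open>Convex (hence induced) subgraphs are identified with their vertex sets.\<close>
definition convex_sg :: "('e \<Rightarrow> sign) set \<Rightarrow> ('e \<Rightarrow> sign) set \<Rightarrow> bool" where
  "convex_sg T H \<longleftrightarrow> H \<subseteq> T \<and>
     (\<forall>u\<in>H. \<forall>v\<in>H. \<forall>p. shortest_path T u v p \<longrightarrow> set p \<subseteq> H)"

definition conv_sg :: "('e \<Rightarrow> sign) set \<Rightarrow> ('e \<Rightarrow> sign) set \<Rightarrow> ('e \<Rightarrow> sign) set" where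
  "conv_sg T S = \<Inter>{C. convex_sg T C \<and> S \<subseteq> C}"

definition antipodal_sg :: "('e \<Rightarrow> sign) set \<Rightarrow> ('e \<Rightarrow> sign) set \<Rightarrow> bool" where
  "antipodal_sg T H \<longleftrightarrow> H \<noteq> {} \<and> H \<subseteq> T \<and>
     (\<forall>x\<in>H. \<exists>y\<in>H. conv_sg T {x, y} = H)"

definition gated_sg :: "('e \<Rightarrow> sign) set \<Rightarrow> ('e \<Rightarrow> sign) set \<Rightarrow> bool" where
  "gated_sg T H \<longleftrightarrow> H \<subseteq> T \<and>
     (\<forall>x\<in>T. \<exists>x'\<in>H. \<forall>y\<in>H. \<exists>p. shortest_path T x y p \<and> x' \<in> set p)"

definition Xsg :: "'e set \<Rightarrow> ('e \<Rightarrow> sign) set \<Rightarrow> ('e \<Rightarrow> sign)" where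
  "Xsg E H = (\<lambda>e. if e \<in> E \<and> (\<forall>v\<in>H. v e = Pos) then Pos
               else if e \<in> E \<and> (\<forall>v\<in>H. v e = Neg) then Neg else Zero)"

definition LG :: "'e set \<Rightarrow> ('e \<Rightarrow> sign) set \<Rightarrow> ('e \<Rightarrow> sign) set" where
  "LG E T = {X \<in> signvectors E. \<forall>Y\<in>T. comp X (negv Y) \<in> T}"

end

theory Submission
  imports Defs
begin


definition le_sv :: "('e \<Rightarrow> sign) \<Rightarrow> ('e \<Rightarrow> sign) \<Rightarrow> bool" where
  "le_sv Z t \<longleftrightarrow> (\<forall>e. Z e \<noteq> Zero \<longrightarrow> t e = Z e)"

definition TX :: "('e \<Rightarrow> sign) set \<Rightarrow> ('e \<Rightarrow> sign) \<Rightarrow> ('e \<Rightarrow> sign) set" where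
  "TX T Z = {t\<in>T. le_sv Z t}"

definition dset :: "('e \<Rightarrow> sign) \<Rightarrow> ('e \<Rightarrow> sign) \<Rightarrow> 'e set" where
  "dset x y = {e. x e \<noteq> y e}"

definition flip :: "('e \<Rightarrow> sign) \<Rightarrow> 'e \<Rightarrow> ('e \<Rightarrow> sign)" where
  "flip x g = x(g := sign_neg (x g))"

definition Xp :: "('e \<Rightarrow> sign) \<Rightarrow> ('e \<Rightarrow> sign) \<Rightarrow> ('e \<Rightarrow> sign)" where
  "Xp x y = (\<lambda>e. if x e = y e then x e else Zero)"

lemma sign_neg_neg[simp]: "sign_neg (sign_neg a) = a" by (cases a) auto
lemma sign_neg_Zero_iff[simp]: "sign_neg a = Zero \<longleftrightarrow> a = Zero" by (cases a) auto
lemma sign_neg_neq: "a \<noteq> Zero \<Longrightarrow> sign_neg a \<noteq> a" by (cases a) auto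
lemma two_val: "a \<noteq> Zero \<Longrightarrow> b \<noteq> Zero \<Longrightarrow> a \<noteq> b \<Longrightarrow> b = sign_neg a" by (cases a; cases b) auto
lemma sign_mult_Neg: "sign_mult a b = Neg \<longleftrightarrow> a \<noteq> Zero \<and> b \<noteq> Zero \<and> b = sign_neg a"
  by (cases a; cases b) auto

lemma walk_single: "walk_betw T x y [a] \<longleftrightarrow> x = a \<and> y = a \<and> a \<in> T"
  by (auto simp: walk_betw_def)

lemma walk_cons:
  assumes l: "l \<noteq> []"
  shows "walk_betw T x y (a # l) \<longleftrightarrow> x = a \<and> a \<in> T \<and> tadj T a (hd l) \<and> walk_betw T (hd l) y l"
proof -
  have "(\<forall>i. Suc i < length (a#l) \<longrightarrow> tadj T ((a#l)!i) ((a#l)!Suc i)) \<longleftrightarrow>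
        tadj T a (hd l) \<and> (\<forall>i. Suc i < length l \<longrightarrow> tadj T (l!i) (l!Suc i))"
  proof
    assume H: "\<forall>i. Suc i < length (a#l) \<longrightarrow> tadj T ((a#l)!i) ((a#l)!Suc i)"
    have "tadj T a (hd l)" using H[rule_format, of 0] l by (simp add: hd_conv_nth)
    moreover have "\<forall>i. Suc i < length l \<longrightarrow> tadj T (l!i) (l!Suc i)"
    proof (intro allI impI)
      fix i assume "Suc i < length l"
      then show "tadj T (l!i) (l!Suc i)" using H[rule_format, of "Suc i"] by simp
    qed
    ultimately show "tadj T a (hd l) \<and> (\<forall>i. Suc i < length l \<longrightarrow> tadj T (l!i) (l!Suc i))" by blast
  next
    assume H: "tadj T a (hd l) \<and> (\<forall>i. Suc i < length l \<longrightarrow> tadj T (l!i) (l!Suc i))"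
    show "\<forall>i. Suc i < length (a#l) \<longrightarrow> tadj T ((a#l)!i) ((a#l)!Suc i)"
    proof (intro allI impI)
      fix i assume "Suc i < length (a#l)"
      then show "tadj T ((a#l)!i) ((a#l)!Suc i)" using H l by (cases i) (auto simp: hd_conv_nth)
    qed
  qed
  then show ?thesis using l by (auto simp: walk_betw_def)
qed

lemma dset_sub: "x \<in> signvectors E \<Longrightarrow> y \<in> signvectors E \<Longrightarrow> dset x y \<subseteq> E"
  by (auto simp: dset_def signvectors_def) (metis)

lemma walk_lower:
  assumes TE: "T \<subseteq> signvectors E" and fin: "finite E"
  shows "walk_betw T x y p \<Longrightarrow> card (dset x y) + 1 \<le> length p"
proof (induction p arbitrary: x)
  case Nil then show ?case by (simp add: walk_betw_def)
next
  case (Cons a l)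
  show ?case
  proof (cases "l = []")
    case True then show ?thesis using Cons.prems by (simp add: walk_single dset_def)
  next
    case False
    with Cons.prems have w: "x = a" "a \<in> T" "tadj T a (hd l)" "walk_betw T (hd l) y l"
      by (auto simp: walk_cons)
    have IH: "card (dset (hd l) y) + 1 \<le> length l" using Cons.IH w(4) .
    have yT: "y \<in> T" using w(4) by (auto simp: walk_betw_def)
    have hT: "hd l \<in> T" using w(3) by (simp add: tadj_def)
    have c1: "card (dset a (hd l)) = 1" using w(3) by (simp add: tadj_def dset_def)
    have f2: "finite (dset (hd l) y)" using dset_sub[of "hd l" E y] hT yT TE fin
      by (meson finite_subset subsetD)
    have f1: "finite (dset a (hd l))" using c1 by (simp add: card_ge_0_finite)
    have "dset a y \<subseteq> dset a (hd l) \<union> dset (hd l) y" by (auto simp: dset_def)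
    then have "card (dset a y) \<le> card (dset a (hd l) \<union> dset (hd l) y)"
      using f1 f2 by (simp add: card_mono)
    also have "\<dots> \<le> card (dset a (hd l)) + card (dset (hd l) y)" by (rule card_Un_le)
    finally show ?thesis using c1 IH w(1) by simp
  qed
qed

lemma walk_split:
  "walk_betw T x y (p1 @ z # p2) \<Longrightarrow> walk_betw T x z (p1 @ [z]) \<and> walk_betw T z y (z # p2)"
proof (induction p1 arbitrary: x)
  case Nil
  then show ?case by (auto simp: walk_betw_def)
next
  case (Cons a p1)
  have ne: "p1 @ z # p2 \<noteq> []" by simp
  from Cons.prems have w: "x = a" "a \<in> T" "tadj T a (hd (p1 @ z # p2))"
     "walk_betw T (hd (p1 @ z # p2)) y (p1 @ z # p2)"
    using walk_cons[OF ne] by auto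
  from Cons.IH[OF w(4)] have "walk_betw T (hd (p1 @ z # p2)) z (p1 @ [z])" "walk_betw T z y (z # p2)"
    by auto
  moreover have "hd (p1 @ [z]) = hd (p1 @ z # p2)" by (cases p1) auto
  ultimately show ?case using w walk_cons[of "p1 @ [z]" T x z a] by auto
qed

lemma walk_append:
  "walk_betw T x z p \<Longrightarrow> walk_betw T z y q \<Longrightarrow> walk_betw T x y (p @ tl q)"
proof (induction p arbitrary: x)
  case Nil then show ?case by (simp add: walk_betw_def)
next
  case (Cons a l)
  show ?case
  proof (cases "l = []")
    case True
    then have "x = a" "z = a" using Cons.prems(1) by (auto simp: walk_single)
    moreover have "q \<noteq> []" "hd q = z" using Cons.prems(2) by (auto simp: walk_betw_def)
    ultimately show ?thesis using True Cons.prems(2) by (cases q) auto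
  next
    case False
    with Cons.prems(1) have w: "x = a" "a \<in> T" "tadj T a (hd l)" "walk_betw T (hd l) z l"
      by (auto simp: walk_cons)
    have "walk_betw T (hd l) y (l @ tl q)" using Cons.IH[OF w(4) Cons.prems(2)] .
    moreover have "l @ tl q \<noteq> []" "hd (l @ tl q) = hd l" using False by auto
    ultimately show ?thesis using w walk_cons[of "l @ tl q" T x y a] by auto
  qed
qed



lemma sign_mult_Zero: "sign_mult a b = Zero \<longleftrightarrow> a = Zero \<or> b = Zero" by (cases a; cases b) auto
lemma sign_neg_eq_self[simp]: "sign_neg a = a \<longleftrightarrow> a = Zero" "a = sign_neg a \<longleftrightarrow> a = Zero" by (cases a; auto)+
lemma sm4: "sign_mult a b \<noteq> sign_mult c d \<Longrightarrow> a \<noteq> Zero \<Longrightarrow> b \<noteq> Zero \<Longrightarrow> c \<noteq> Zero \<Longrightarrow> d \<noteq> Zero \<Longrightarrow> (a = c) \<noteq> (b = d)"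
  by (cases a; cases b; cases c; cases d) auto

lemma pn_set: "{a, b} = {Pos, Neg} \<Longrightarrow> a \<noteq> Zero \<and> b \<noteq> Zero \<and> a \<noteq> b"
  by (cases a; cases b) (auto simp: doubleton_eq_iff)

locale scom =
  fixes E :: "'e set" and L :: "('e \<Rightarrow> sign) set"
  assumes finE: "finite E" and Lsv: "L \<subseteq> signvectors E" and Lne: "L \<noteq> {}"
    and com: "COM E L" and simpl: "simple_svs E L"
begin

abbreviation "T \<equiv> topes E L"

lemma T_L: "t \<in> T \<Longrightarrow> t \<in> L" by (simp add: topes_def)
lemma L_out: "X \<in> L \<Longrightarrow> e \<notin> E \<Longrightarrow> X e = Zero" using Lsv by (auto simp: signvectors_def)
lemma T_out: "t \<in> T \<Longrightarrow> e \<notin> E \<Longrightarrow> t e = Zero" using L_out T_L by blast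
lemma T_in: "t \<in> T \<Longrightarrow> e \<in> E \<Longrightarrow> t e \<noteq> Zero" by (simp add: topes_def)
lemma T_sv: "T \<subseteq> signvectors E" using Lsv by (auto simp: topes_def)

lemma FS: "X \<in> L \<Longrightarrow> Y \<in> L \<Longrightarrow> comp X (negv Y) \<in> L"
  using com by (simp add: COM_def face_symmetry_def)

lemma comp_L: assumes "X \<in> L" "Y \<in> L" shows "comp X Y \<in> L"
proof -
  have "comp X Y = comp X (negv (comp X (negv Y)))"
    by (auto simp: comp_def negv_def fun_eq_iff)
  then show ?thesis using FS[OF assms(1) FS[OF assms]] by simp
qed

lemma comp_T: "X \<in> L \<Longrightarrow> t \<in> T \<Longrightarrow> comp X t \<in> T"
  using comp_L[of X t] by (auto simp: topes_def comp_def)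

lemma FS_T: "X \<in> L \<Longrightarrow> t \<in> T \<Longrightarrow> comp X (negv t) \<in> T"
  using FS[of X t] by (auto simp: topes_def comp_def negv_def)

lemma dset_E: "x \<in> T \<Longrightarrow> y \<in> T \<Longrightarrow> dset x y \<subseteq> E"
proof
  fix g assume a: "x \<in> T" "y \<in> T" "g \<in> dset x y"
  show "g \<in> E"
  proof (rule ccontr)
    assume "g \<notin> E"
    then have "x g = y g" using T_out[OF a(1)] T_out[OF a(2)] by simp
    with a(3) show False by (simp add: dset_def)
  qed
qed

lemma sep_T: "x \<in> T \<Longrightarrow> y \<in> T \<Longrightarrow> sep E x y = dset x y"
proof (intro set_eqI iffI)
  fix e assume a: "x \<in> T" "y \<in> T" "e \<in> sep E x y"
  from a(3) have "sign_mult (x e) (y e) = Neg" by (simp add: sep_def)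
  then have "x e \<noteq> y e" by (cases "x e"; cases "y e") auto
  then show "e \<in> dset x y" by (simp add: dset_def)
next
  fix e assume a: "x \<in> T" "y \<in> T" "e \<in> dset x y"
  then have d: "x e \<noteq> y e" by (simp add: dset_def)
  then have eE: "e \<in> E" using dset_E[OF a(1,2)] a(3) by blast
  then have "x e \<noteq> Zero" "y e \<noteq> Zero" using a T_in by auto
  with d have "sign_mult (x e) (y e) = Neg" by (cases "x e"; cases "y e") auto
  then show "e \<in> sep E x y" using eE by (simp add: sep_def)
qed

lemma dset_fin: "x \<in> T \<Longrightarrow> y \<in> T \<Longrightarrow> finite (dset x y)"
  using dset_E finE by (rule finite_subset)

lemma T_ne: "T \<noteq> {}"
proof -
  obtain X0 where "X0 \<in> L" using Lne by blast
  then obtain X where X: "X \<in> L" and mn: "\<And>Y. Y \<in> L \<Longrightarrow> card {e\<in>E. X e = Zero} \<le> card {e\<in>E. Y e = Zero}"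
    using ex_has_least_nat[of "\<lambda>X. X \<in> L" X0 "\<lambda>X. card {e\<in>E. X e = Zero}"] by blast
  have "X \<in> T"
  proof (rule ccontr)
    assume "X \<notin> T"
    then obtain e where e: "e \<in> E" "X e = Zero" using X by (auto simp: topes_def)
    have "\<forall>e\<in>E. \<forall>s. \<exists>X\<in>L. X e = s" using simpl by (simp add: simple_svs_def)
    then obtain W where W: "W \<in> L" "W e = Pos" using e(1) by blast
    have "{f\<in>E. comp X W f = Zero} \<subseteq> {f\<in>E. X f = Zero} - {e}" using W e by (auto simp: comp_def)
    moreover have "e \<in> {f\<in>E. X f = Zero}" using e by simp
    ultimately have "{f\<in>E. comp X W f = Zero} \<subset> {f\<in>E. X f = Zero}" by blast
    then have "card {f\<in>E. comp X W f = Zero} < card {f\<in>E. X f = Zero}"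
      using finE by (simp add: psubset_card_mono)
    with mn[OF comp_L[OF X W(1)]] show False by simp
  qed
  then show ?thesis by blast
qed

lemma flip_exists:
  assumes "x \<in> T" "y \<in> T" "x \<noteq> y"
  shows "\<exists>g. x g \<noteq> y g \<and> flip x g \<in> T"
  using assms
proof (induction "card (dset x y)" arbitrary: y rule: less_induct)
  case less
  let ?S = "dset x y"
  have IH: "\<exists>g. x g \<noteq> y g \<and> flip x g \<in> T" if y': "y' \<in> T" "x \<noteq> y'" "dset x y' \<subset> ?S" for y'
  proof -
    have "card (dset x y') < card ?S" using psubset_card_mono[OF dset_fin[OF less.prems(1,2)] y'(3)] .
    from less.hyps[OF this less.prems(1) y'(1,2)] obtain g where "x g \<noteq> y' g" "flip x g \<in> T" by blast
    then show ?thesis using y'(3) by (auto simp: dset_def)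
  qed
  obtain e where e: "x e \<noteq> y e" using less.prems(3) by blast
  have eE: "e \<in> E" using e dset_E[OF less.prems(1,2)] by (auto simp: dset_def)
  show ?case
  proof (cases "?S = {e}")
    case True
    have "y = flip x e"
    proof
      fix f show "y f = flip x e f"
      proof (cases "f = e")
        case True then show ?thesis using e eE T_in less.prems two_val by (simp add: flip_def)
      next
        case False then have "f \<notin> ?S" using \<open>?S = {e}\<close> by blast
        then show ?thesis using False by (simp add: dset_def flip_def)
      qed
    qed
    then show ?thesis using e less.prems(2) by auto
  next
    case False
    have "e \<in> ?S" using e by (simp add: dset_def)
    have "\<exists>f. f \<in> ?S \<and> f \<noteq> e"
    proof (rule ccontr)
      assume "\<not> (\<exists>f. f \<in> ?S \<and> f \<noteq> e)"
      then have "?S \<subseteq> {e}" by auto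
      with \<open>e \<in> ?S\<close> have "?S = {e}" by auto
      with False show False by simp
    qed
    then obtain f where f: "f \<in> ?S" "f \<noteq> e" by (elim exE conjE)
    have fE: "f \<in> E" using f dset_E[OF less.prems(1,2)] by blast
    have "e \<in> sep E x y" using sep_T less.prems e by (simp add: dset_def)
    moreover have "\<forall>X\<in>L. \<forall>Y\<in>L. \<forall>e\<in>sep E X Y. \<exists>Z\<in>L. Z e = Zero \<and>
        (\<forall>f\<in>E - sep E X Y. Z f = comp X Y f)" using com by (simp add: COM_def strong_elimination_def)
    ultimately obtain Z where Z: "Z \<in> L" "Z e = Zero" "\<And>g. g \<in> E - sep E x y \<Longrightarrow> Z g = comp x y g"
      using T_L[OF less.prems(1)] T_L[OF less.prems(2)] by blast
    have Zoff: "Z g = x g" if "g \<in> E" "x g = y g" for g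
      using Z(3)[of g] that sep_T less.prems T_in by (auto simp: dset_def comp_def)
    let ?T1 = "comp Z x"
    have T1: "?T1 \<in> T" using comp_T Z(1) less.prems(1) by blast
    have d1: "dset x ?T1 \<subset> ?S"
    proof -
      have "dset x ?T1 \<subseteq> ?S"
      proof
        fix g assume g: "g \<in> dset x ?T1"
        show "g \<in> ?S"
        proof (rule ccontr)
          assume "g \<notin> ?S"
          then have "x g = y g" by (simp add: dset_def)
          moreover have "g \<in> E" using g dset_E[OF less.prems(1) T1] by blast
          ultimately have "Z g = x g" using Zoff by blast
          then have "comp Z x g = x g" by (simp add: comp_def)
          with g show False by (simp add: dset_def)
        qed
      qed
      moreover have "e \<notin> dset x ?T1" using Z(2) by (simp add: dset_def comp_def)
      ultimately show ?thesis using e by (auto simp: dset_def)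
    qed
    show ?thesis
    proof (cases "x = ?T1")
      case False then show ?thesis using IH T1 d1 by blast
    next
      case True
      then have Zle: "Z g = x g" if "Z g \<noteq> Zero" for g
      proof -
        have "comp Z x g = Z g" using that by (simp add: comp_def)
        then show ?thesis using fun_cong[OF True, of g] by simp
      qed
      let ?T2 = "comp Z y"
      have T2: "?T2 \<in> T" using comp_T Z(1) less.prems(2) by blast
      have d2: "dset x ?T2 = {g \<in> ?S. Z g = Zero}"
        using Zle by (auto simp: dset_def comp_def)
      show ?thesis
      proof (cases "dset x ?T2 = ?S")
        case False
        moreover have "e \<in> dset x ?T2" using d2 e Z(2) by (simp add: dset_def)
        ultimately show ?thesis using IH[of ?T2] T2 d2 by (auto simp: dset_def)
      next
        case True
        then have Z0: "Z g = Zero" if "g \<in> ?S" for g using d2 that by blast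
        have "\<forall>e\<in>E. \<forall>f\<in>E. e \<noteq> f \<longrightarrow> (\<exists>X\<in>L. \<exists>Y\<in>L. {sign_mult (X e) (X f), sign_mult (Y e) (Y f)} = {Pos, Neg})"
          using simpl unfolding simple_svs_def by (rule conjunct2)
        from this[rule_format, OF eE fE not_sym[OF f(2)]] obtain W1 where
          W1: "W1 \<in> L" "\<exists>Y\<in>L. {sign_mult (W1 e) (W1 f), sign_mult (Y e) (Y f)} = {Pos, Neg}"
          by (rule bexE)
        from W1(2) obtain W2 where
          W2: "W2 \<in> L" "{sign_mult (W1 e) (W1 f), sign_mult (W2 e) (W2 f)} = {Pos, Neg}"
          by (rule bexE)
        have pn: "sign_mult (W1 e) (W1 f) \<noteq> Zero" "sign_mult (W2 e) (W2 f) \<noteq> Zero"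
               "sign_mult (W1 e) (W1 f) \<noteq> sign_mult (W2 e) (W2 f)"
          using pn_set[OF W2(2)] by auto
        have "\<exists>W\<in>L. sign_mult (W e) (W f) \<noteq> sign_mult (x e) (x f) \<and> sign_mult (W e) (W f) \<noteq> Zero"
        proof (cases "sign_mult (W1 e) (W1 f) = sign_mult (x e) (x f)")
          case True
          then show ?thesis using pn W2(1) by (intro bexI[of _ W2]) auto
        next
          case False
          then show ?thesis using pn W1(1) by (intro bexI[of _ W1]) auto
        qed
        then obtain W where Wd: "W \<in> L" "sign_mult (W e) (W f) \<noteq> sign_mult (x e) (x f)"
          "sign_mult (W e) (W f) \<noteq> Zero" by blast
        have Wnz: "W e \<noteq> Zero" "W f \<noteq> Zero" using Wd(3)
          by (auto simp: sign_mult_Zero)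
        let ?T3 = "comp (comp Z W) x"
        have T3: "?T3 \<in> T" using comp_T comp_L Z(1) Wd(1) less.prems(1) by blast
        have T3e: "?T3 e = W e" "?T3 f = W f" using Z0 e f Wnz by (auto simp: comp_def dset_def)
        have d3s: "dset x ?T3 \<subseteq> ?S"
        proof
          fix g assume g: "g \<in> dset x ?T3"
          show "g \<in> ?S"
          proof (rule ccontr)
            assume "g \<notin> ?S"
            then have "x g = y g" by (simp add: dset_def)
            moreover have "g \<in> E" using g dset_E[OF less.prems(1) T3] by blast
            ultimately have "Z g = x g" "x g \<noteq> Zero" using Zoff T_in[OF less.prems(1)] by blast+
            then have "comp (comp Z W) x g = x g" by (simp add: comp_def)
            with g show False by (simp add: dset_def)
          qed
        qed
        have xnz: "x e \<noteq> Zero" "x f \<noteq> Zero" using T_in less.prems(1) eE fE by auto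
        have "(W e = x e) \<noteq> (W f = x f)"
          using sm4[OF Wd(2) Wnz xnz] .
        moreover have "e \<in> dset x ?T3 \<longleftrightarrow> W e \<noteq> x e" using T3e(1) by (auto simp: dset_def)
        moreover have "f \<in> dset x ?T3 \<longleftrightarrow> W f \<noteq> x f" using T3e(2) by (auto simp: dset_def)
        ultimately have ef: "(e \<in> dset x ?T3) \<noteq> (f \<in> dset x ?T3)" by simp
        have eS: "e \<in> ?S" "f \<in> ?S" using e f(1) by (auto simp: dset_def)
        have "dset x ?T3 \<noteq> ?S" using ef eS by blast
        then have ps: "dset x ?T3 \<subset> ?S" using d3s by blast
        have "dset x ?T3 \<noteq> {}" using ef by blast
        then have "x \<noteq> ?T3" by (auto simp: dset_def)
        then show ?thesis using IH T3 ps by blast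
      qed
    qed
  qed
qed

end


context scom
begin

lemma dset_flip:
  assumes "x \<in> T" "y \<in> T" "x g \<noteq> y g"
  shows "dset (flip x g) y = dset x y - {g}"
proof -
  have gE: "g \<in> E" using dset_E[OF assms(1,2)] assms(3) by (auto simp: dset_def)
  have "y g = sign_neg (x g)" using two_val[OF T_in[OF assms(1) gE] T_in[OF assms(2) gE] assms(3)] .
  then show ?thesis by (auto simp: dset_def flip_def)
qed

lemma tadj_flip:
  assumes "x \<in> T" "flip x g \<in> T" "g \<in> E"
  shows "tadj T x (flip x g)"
proof -
  have "x g \<noteq> Zero" using T_in assms(1,3) by blast
  then have "{e. x e \<noteq> flip x g e} = {g}" by (auto simp: flip_def)
  then show ?thesis using assms by (simp add: tadj_def)
qed

lemma walk_exists:
  assumes "x \<in> T" "y \<in> T"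
  shows "\<exists>p. walk_betw T x y p \<and> length p = card (dset x y) + 1"
  using assms
proof (induction "card (dset x y)" arbitrary: x rule: less_induct)
  case less
  show ?case
  proof (cases "x = y")
    case True
    then have "walk_betw T x y [x]" "dset x y = {}" using less.prems by (auto simp: walk_single dset_def)
    then show ?thesis by (intro exI[of _ "[x]"]) simp
  next
    case False
    then obtain g where g: "x g \<noteq> y g" "flip x g \<in> T" using flip_exists less.prems by blast
    have gS: "g \<in> dset x y" using g by (simp add: dset_def)
    have gE: "g \<in> E" using dset_E[OF less.prems] gS by blast
    have d: "dset (flip x g) y = dset x y - {g}" using dset_flip less.prems g(1) .
    have "card (dset (flip x g) y) < card (dset x y)"
      unfolding d by (rule card_Diff1_less[OF dset_fin[OF less.prems] gS])
    from less.hyps[OF this g(2) less.prems(2)] obtain q where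
      q: "walk_betw T (flip x g) y q" "length q = card (dset (flip x g) y) + 1" by blast
    have qne: "q \<noteq> []" "hd q = flip x g" using q(1) by (auto simp: walk_betw_def)
    have "walk_betw T x y (x # q)"
      using walk_cons[OF qne(1)] qne(2) q(1) tadj_flip[OF less.prems(1) g(2) gE] less.prems(1) by simp
    moreover have "length (x # q) = card (dset x y) + 1"
      using q(2) d gS dset_fin[OF less.prems] card_Diff1_less[of "dset x y" g]
      by (simp add: card_Diff_singleton)
    ultimately show ?thesis by blast
  qed
qed

lemma sp_char:
  assumes "x \<in> T" "y \<in> T"
  shows "shortest_path T x y p \<longleftrightarrow> walk_betw T x y p \<and> length p = card (dset x y) + 1"
proof
  assume sp: "shortest_path T x y p"
  obtain q where q: "walk_betw T x y q" "length q = card (dset x y) + 1"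
    using walk_exists[OF assms] by blast
  have "length p \<le> length q" using sp q(1) by (simp add: shortest_path_def)
  moreover have "card (dset x y) + 1 \<le> length p"
    using walk_lower[OF T_sv finE] sp by (simp add: shortest_path_def)
  ultimately show "walk_betw T x y p \<and> length p = card (dset x y) + 1"
    using sp q(2) by (simp add: shortest_path_def)
next
  assume "walk_betw T x y p \<and> length p = card (dset x y) + 1"
  then show "shortest_path T x y p"
    using walk_lower[OF T_sv finE] by (simp add: shortest_path_def)
qed

lemma walk_T: "walk_betw T x y p \<Longrightarrow> set p \<subseteq> T \<and> x \<in> T \<and> y \<in> T"
  by (auto simp: walk_betw_def)

lemma sp_interval:
  assumes sp: "shortest_path T x y p" and z: "z \<in> set p"
  shows "z \<in> T \<and> (\<forall>f. z f = x f \<or> z f = y f)"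
proof -
  have w: "walk_betw T x y p" using sp by (simp add: shortest_path_def)
  have xT: "x \<in> T" and yT: "y \<in> T" and zT: "z \<in> T" using walk_T[OF w] z by auto
  obtain p1 p2 where p: "p = p1 @ z # p2" using z by (meson split_list)
  from walk_split[of T x y p1 z p2] w p have w1: "walk_betw T x z (p1 @ [z])"
    and w2: "walk_betw T z y (z # p2)" by auto
  have l1: "card (dset x z) + 1 \<le> length (p1 @ [z])" using walk_lower[OF T_sv finE w1] .
  have l2: "card (dset z y) + 1 \<le> length (z # p2)" using walk_lower[OF T_sv finE w2] .
  have lp: "length p = card (dset x y) + 1" using sp_char[OF xT yT] sp by simp
  have sum: "card (dset x z) + card (dset z y) \<le> card (dset x y)" using l1 l2 lp p by simp
  have "\<forall>f. z f = x f \<or> z f = y f"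
  proof (rule ccontr)
    assume "\<not> (\<forall>f. z f = x f \<or> z f = y f)"
    then obtain f where f: "z f \<noteq> x f" "z f \<noteq> y f" by blast
    have fE: "f \<in> E" using dset_E[OF xT zT] f(1) by (auto simp: dset_def)
    have "x f = y f" using two_val[OF T_in[OF zT fE] T_in[OF xT fE]] two_val[OF T_in[OF zT fE] T_in[OF yT fE]]
        f by auto
    have fin1: "finite (dset x z)" and fin2: "finite (dset z y)" using dset_fin xT yT zT by auto
    have sub: "dset x y \<subseteq> dset x z \<union> dset z y" by (auto simp: dset_def)
    have fi: "f \<in> dset x z \<inter> dset z y" using f by (auto simp: dset_def)
    have "card (dset x z) + card (dset z y) = card (dset x z \<union> dset z y) + card (dset x z \<inter> dset z y)"
      using card_Un_Int[OF fin1 fin2] .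
    moreover have "card (dset x z \<inter> dset z y) \<ge> 1"
      using fi fin1 by (metis One_nat_def Suc_leI card_gt_0_iff empty_iff finite_Int)
    moreover have "card (dset x y) \<le> card (dset x z \<union> dset z y)"
      using sub fin1 fin2 by (simp add: card_mono)
    ultimately show False using sum by linarith
  qed
  then show ?thesis using zT by blast
qed

lemma interval_sp:
  assumes xT: "x \<in> T" and yT: "y \<in> T" and zT: "z \<in> T" and I: "\<forall>f. z f = x f \<or> z f = y f"
  shows "\<exists>p. shortest_path T x y p \<and> z \<in> set p"
proof -
  obtain p1 where p1: "walk_betw T x z p1" "length p1 = card (dset x z) + 1"
    using walk_exists[OF xT zT] by blast
  obtain p2 where p2: "walk_betw T z y p2" "length p2 = card (dset z y) + 1"
    using walk_exists[OF zT yT] by blast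
  have w: "walk_betw T x y (p1 @ tl p2)" using walk_append[OF p1(1) p2(1)] .
  have fin1: "finite (dset x z)" and fin2: "finite (dset z y)" using dset_fin xT yT zT by auto
  have un: "dset x y = dset x z \<union> dset z y" using I by (auto simp: dset_def) (metis)+
  have int: "dset x z \<inter> dset z y = {}" using I by (auto simp: dset_def) (metis)
  have "card (dset x y) = card (dset x z) + card (dset z y)"
    unfolding un using card_Un_disjoint[OF fin1 fin2 int] .
  then have "length (p1 @ tl p2) = card (dset x y) + 1" using p1(2) p2(2) by simp
  then have "shortest_path T x y (p1 @ tl p2)" using sp_char[OF xT yT] w by simp
  moreover have "z \<in> set (p1 @ tl p2)" using p1(1) by (auto simp: walk_betw_def)
  ultimately show ?thesis by blast
qed

lemma convex_iff:
  "convex_sg T C \<longleftrightarrow> C \<subseteq> T \<and> (\<forall>u\<in>C. \<forall>v\<in>C. \<forall>z\<in>T. (\<forall>f. z f = u f \<or> z f = v f) \<longrightarrow> z \<in> C)"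
proof
  assume c: "convex_sg T C"
  show "C \<subseteq> T \<and> (\<forall>u\<in>C. \<forall>v\<in>C. \<forall>z\<in>T. (\<forall>f. z f = u f \<or> z f = v f) \<longrightarrow> z \<in> C)"
  proof (intro conjI ballI impI)
    show "C \<subseteq> T" using c by (simp add: convex_sg_def)
  next
    fix u v z assume uv: "u \<in> C" "v \<in> C" "z \<in> T" "\<forall>f. z f = u f \<or> z f = v f"
    have "u \<in> T" "v \<in> T" using c uv by (auto simp: convex_sg_def)
    then obtain p where "shortest_path T u v p" "z \<in> set p" using interval_sp uv(3,4) by blast
    then show "z \<in> C" using c uv(1,2) unfolding convex_sg_def by blast
  qed
next
  assume c: "C \<subseteq> T \<and> (\<forall>u\<in>C. \<forall>v\<in>C. \<forall>z\<in>T. (\<forall>f. z f = u f \<or> z f = v f) \<longrightarrow> z \<in> C)"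
  show "convex_sg T C" unfolding convex_sg_def
  proof (intro conjI ballI allI impI)
    show "C \<subseteq> T" using c by simp
  next
    fix u v p assume a: "u \<in> C" "v \<in> C" "shortest_path T u v p"
    show "set p \<subseteq> C"
    proof
      fix z assume z: "z \<in> set p"
      from sp_interval[OF a(3) z] have "z \<in> T" "\<forall>f. z f = u f \<or> z f = v f" by auto
      then show "z \<in> C" using c a(1,2) by blast
    qed
  qed
qed

lemma TX_convex: "convex_sg T (TX T Z)"
  unfolding convex_iff TX_def le_sv_def by auto metis

lemma Xp_le: "le_sv (Xp x y) x" "le_sv (Xp x y) y"
  by (auto simp: le_sv_def Xp_def split: if_splits)

lemma conv_Xp:
  assumes xT: "x \<in> T" and yT: "y \<in> T"
  shows "conv_sg T {x, y} = TX T (Xp x y)"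
proof
  show "conv_sg T {x, y} \<subseteq> TX T (Xp x y)"
    unfolding conv_sg_def using TX_convex xT yT Xp_le by (intro Inter_lower) (auto simp: TX_def)
next
  show "TX T (Xp x y) \<subseteq> conv_sg T {x, y}"
    unfolding conv_sg_def
  proof (rule Inter_greatest)
    fix C assume "C \<in> {C. convex_sg T C \<and> {x, y} \<subseteq> C}"
    then have cC: "convex_sg T C" and xyC: "x \<in> C" "y \<in> C" by auto
    note cc = cC[unfolded convex_iff]
    have CT: "C \<subseteq> T" using cc by (rule conjunct1)
    note cv = conjunct2[OF cc, rule_format]
    show "TX T (Xp x y) \<subseteq> C"
    proof
      fix t assume t: "t \<in> TX T (Xp x y)"
      then have tT: "t \<in> T" and tle: "le_sv (Xp x y) t" by (auto simp: TX_def)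
      show "t \<in> C"
      proof (rule ccontr)
        assume tC: "t \<notin> C"
        obtain c where c: "c \<in> C" and mn: "\<And>c'. c' \<in> C \<Longrightarrow> card (dset c t) \<le> card (dset c' t)"
          using ex_has_least_nat[of "\<lambda>c. c \<in> C" x "\<lambda>c. card (dset c t)"] xyC by blast
        have cT: "c \<in> T" using c CT by blast
        have "c \<noteq> t" using c tC by blast
        then obtain g where g: "c g \<noteq> t g" "flip c g \<in> T" using flip_exists cT tT by blast
        have gE: "g \<in> E" using dset_E[OF cT tT] g(1) by (auto simp: dset_def)
        have d: "dset (flip c g) t = dset c t - {g}" using dset_flip[OF cT tT g(1)] .
        have gS: "g \<in> dset c t" using g(1) by (simp add: dset_def)
        have "card (dset (flip c g) t) < card (dset c t)"
          unfolding d by (rule card_Diff1_less[OF dset_fin[OF cT tT] gS])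
        then have wC: "flip c g \<notin> C" using mn by fastforce
        have tg: "t g = sign_neg (c g)"
          using two_val[OF T_in[OF cT gE] T_in[OF tT gE] g(1)] .
        define c' where "c' = (if x g = t g then x else y)"
        have c'C: "c' \<in> C" using xyC by (simp add: c'_def)
        have c'g: "c' g = t g"
        proof (cases "x g = t g")
          case True then show ?thesis by (simp add: c'_def)
        next
          case False
          have "x g \<noteq> y g"
          proof
            assume "x g = y g"
            then have "Xp x y g = x g" by (simp add: Xp_def)
            moreover have "x g \<noteq> Zero" using T_in xT gE by blast
            ultimately have "t g = x g" using tle by (simp add: le_sv_def)
            with False show False by simp
          qed
          have "y g = t g"
            using two_val[OF T_in[OF xT gE] T_in[OF yT gE] \<open>x g \<noteq> y g\<close>]
              two_val[OF T_in[OF xT gE] T_in[OF tT gE]] False by simp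
          then show ?thesis using False by (simp add: c'_def)
        qed
        have "\<forall>f. flip c g f = c f \<or> flip c g f = c' f"
          using c'g tg by (auto simp: flip_def)
        then have "flip c g \<in> C" using cv[OF c c'C g(2)] by blast
        with wC show False by contradiction
      qed
    qed
  qed
qed

end


context scom
begin

lemma key:
  assumes "B \<in> signvectors E" "TX T B \<noteq> {}" "\<forall>t\<in>TX T B. comp B (negv t) \<in> T"
  shows "B \<in> L"
  using assms
proof (induction "card {e\<in>E. B e = Zero}" arbitrary: B rule: less_induct)
  case less
  define S where "S = {e\<in>E. B e = Zero}"
  have finS: "finite S" using finE by (simp add: S_def)
  obtain t0 where t0: "t0 \<in> TX T B" using less.prems(2) by blast
  have Bout: "B e = Zero" if "e \<notin> E" for e using less.prems(1) that by (simp add: signvectors_def)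
  have step: "\<exists>A'\<in>L. le_sv B A' \<and> {e\<in>S. A' e \<noteq> Zero} \<subset> {e\<in>S. A e \<noteq> Zero}"
    if A: "A \<in> L" "le_sv B A" "g \<in> S" "A g \<noteq> Zero" for A g
  proof -
    define B' where "B' = comp B (negv A)"
    have gE: "g \<in> E" "B g = Zero" using A(3) by (auto simp: S_def)
    have B'g: "B' g = sign_neg (A g)" using gE by (simp add: B'_def comp_def negv_def)
    have B'B: "B' e = B e" if "B e \<noteq> Zero" for e using that by (simp add: B'_def comp_def)
    have B'0: "B' e = sign_neg (A e)" if "B e = Zero" for e using that by (simp add: B'_def comp_def negv_def)
    have Aout: "A e = Zero" if "e \<notin> E" for e using L_out A(1) that by blast
    have AB: "A e = B e" if "B e \<noteq> Zero" for e using A(2) that by (simp add: le_sv_def)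
    have B'sv: "B' \<in> signvectors E"
      unfolding signvectors_def using Bout Aout B'0 by simp
    have "{e\<in>E. B' e = Zero} \<subseteq> S - {g}"
    proof
      fix e assume e: "e \<in> {e\<in>E. B' e = Zero}"
      then have eE: "e \<in> E" and B'e: "B' e = Zero" by auto
      have "B e = Zero"
      proof (rule ccontr)
        assume "B e \<noteq> Zero"
        then show False using B'B[of e] B'e by simp
      qed
      moreover have "e \<noteq> g" using B'e B'g A(4) by auto
      ultimately show "e \<in> S - {g}" using eE by (simp add: S_def)
    qed
    then have "{e\<in>E. B' e = Zero} \<subset> S" using A(3) by blast
    then have lt: "card {e\<in>E. B' e = Zero} < card {e\<in>E. B e = Zero}"
      using psubset_card_mono[OF finS] by (simp add: S_def)
    have t0T: "t0 \<in> T" "le_sv B t0" using t0 by (auto simp: TX_def)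
    define t0' where "t0' = comp A t0"
    have t0'T: "t0' \<in> T" using comp_T A(1) t0T(1) by (simp add: t0'_def)
    have t0'le: "le_sv B t0'" using AB by (auto simp: le_sv_def t0'_def comp_def)
    have s'T: "comp B (negv t0') \<in> T" using less.prems(3) t0'T t0'le by (simp add: TX_def)
    have "le_sv B' (comp B (negv t0'))"
      unfolding le_sv_def
    proof (intro allI impI)
      fix e assume "B' e \<noteq> Zero"
      show "comp B (negv t0') e = B' e"
      proof (cases "B e = Zero")
        case True
        then have "A e \<noteq> Zero" using \<open>B' e \<noteq> Zero\<close> B'0 by simp
        then show ?thesis using True B'0 by (simp add: comp_def negv_def t0'_def)
      next
        case False then show ?thesis using B'B by (simp add: comp_def)
      qed
    qed
    then have ne: "TX T B' \<noteq> {}" using s'T by (auto simp: TX_def)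
    have cl: "\<forall>t\<in>TX T B'. comp B' (negv t) \<in> T"
    proof
      fix t assume t: "t \<in> TX T B'"
      then have tT: "t \<in> T" and tle: "le_sv B' t" by (auto simp: TX_def)
      have "le_sv B t" using tle B'B by (simp add: le_sv_def)
      then have sT: "comp B (negv t) \<in> T" using less.prems(3) tT by (simp add: TX_def)
      define r where "r = comp A (negv (comp B (negv t)))"
      have rT: "r \<in> T" using FS_T A(1) sT by (simp add: r_def)
      have rle: "le_sv B r" using AB by (auto simp: le_sv_def r_def comp_def)
      have "comp B (negv r) \<in> T" using less.prems(3) rT rle by (simp add: TX_def)
      moreover have "comp B (negv r) = comp B' (negv t)"
      proof
        fix e show "comp B (negv r) e = comp B' (negv t) e"
          by (cases "B e = Zero"; cases "A e = Zero")
             (simp_all add: r_def comp_def negv_def B'_def)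
      qed
      ultimately show "comp B' (negv t) \<in> T" by simp
    qed
    have B'L: "B' \<in> L" using less.hyps[OF lt B'sv ne cl] .
    have "g \<in> sep E A B'" using gE B'g A(4) by (simp add: sep_def sign_mult_Neg)
    moreover have "\<forall>X\<in>L. \<forall>Y\<in>L. \<forall>e\<in>sep E X Y. \<exists>Z\<in>L. Z e = Zero \<and>
        (\<forall>f\<in>E - sep E X Y. Z f = comp X Y f)" using com by (simp add: COM_def strong_elimination_def)
    ultimately obtain Z where Z: "Z \<in> L" "Z g = Zero" "\<And>f. f \<in> E - sep E A B' \<Longrightarrow> Z f = comp A B' f"
      using A(1) B'L by blast
    have Zle: "le_sv B Z"
      unfolding le_sv_def
    proof (intro allI impI)
      fix e assume Be: "B e \<noteq> Zero"
      then have eE: "e \<in> E" using Bout by blast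
      have "sign_mult (A e) (B' e) \<noteq> Neg" using AB[OF Be] B'B[OF Be] Be by (simp add: sign_mult_Neg)
      then have "e \<notin> sep E A B'" by (simp add: sep_def)
      then have "Z e = comp A B' e" using Z(3) eE by blast
      then show "Z e = B e" using AB[OF Be] Be by (simp add: comp_def)
    qed
    have "{e\<in>S. Z e \<noteq> Zero} \<subseteq> {e\<in>S. A e \<noteq> Zero} - {g}"
    proof
      fix e assume e: "e \<in> {e\<in>S. Z e \<noteq> Zero}"
      then have eE: "e \<in> E" and Be: "B e = Zero" and Ze: "Z e \<noteq> Zero" by (auto simp: S_def)
      have "e \<noteq> g" using Ze Z(2) by blast
      moreover have "A e \<noteq> Zero"
      proof
        assume Ae: "A e = Zero"
        then have "B' e = Zero" using B'0[OF Be] by simp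
        then have "e \<notin> sep E A B'" by (simp add: sep_def sign_mult_Neg)
        then have "Z e = comp A B' e" using Z(3) eE by blast
        then show False using Ze Ae \<open>B' e = Zero\<close> by (simp add: comp_def)
      qed
      ultimately show "e \<in> {e\<in>S. A e \<noteq> Zero} - {g}" using e by auto
    qed
    then have "{e\<in>S. Z e \<noteq> Zero} \<subset> {e\<in>S. A e \<noteq> Zero}" using A(3,4) by blast
    then show ?thesis using Z(1) Zle by blast
  qed
  have t0L: "t0 \<in> L" "le_sv B t0" using t0 T_L by (auto simp: TX_def)
  obtain A where A: "A \<in> L \<and> le_sv B A"
    and mn: "\<And>A'. A' \<in> L \<and> le_sv B A' \<Longrightarrow> card {e\<in>S. A e \<noteq> Zero} \<le> card {e\<in>S. A' e \<noteq> Zero}"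
    using ex_has_least_nat[of "\<lambda>A. A \<in> L \<and> le_sv B A" t0 "\<lambda>A. card {e\<in>S. A e \<noteq> Zero}"] t0L by blast
  have emp: "{e\<in>S. A e \<noteq> Zero} = {}"
  proof (rule ccontr)
    assume ne: "{e\<in>S. A e \<noteq> Zero} \<noteq> {}"
    then obtain g where g: "g \<in> {e\<in>S. A e \<noteq> Zero}" by (meson all_not_in_conv)
    then have g1: "g \<in> S" "A g \<noteq> Zero" by simp_all
    from step[OF conjunct1[OF A] conjunct2[OF A] g1] obtain A' where
      A': "A' \<in> L" "le_sv B A'" "{e\<in>S. A' e \<noteq> Zero} \<subset> {e\<in>S. A e \<noteq> Zero}" by blast
    have finA: "finite {e\<in>S. A e \<noteq> Zero}" using finS by simp
    have lt: "card {e\<in>S. A' e \<noteq> Zero} < card {e\<in>S. A e \<noteq> Zero}"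
      by (rule psubset_card_mono[OF finA A'(3)])
    have "card {e\<in>S. A e \<noteq> Zero} \<le> card {e\<in>S. A' e \<noteq> Zero}" by (rule mn[OF conjI[OF A'(1) A'(2)]])
    with lt show False by linarith
  qed
  have "A = B"
  proof
    fix e show "A e = B e"
    proof (cases "e \<in> E")
      case False then show ?thesis using Bout[OF False] L_out[OF conjunct1[OF A] False] by simp
    next
      case True
      show ?thesis
      proof (cases "B e = Zero")
        case True
        then have "e \<in> S" using \<open>e \<in> E\<close> by (simp add: S_def)
        then have "\<not> (A e \<noteq> Zero)" using emp by blast
        then show ?thesis using True by simp
      next
        case False then show ?thesis using A by (simp add: le_sv_def)
      qed
    qed
  qed
  then show ?case using A by simp
qed

lemma Xsg_TX:
  assumes HT: "H \<subseteq> T" and xH: "x \<in> H" and yH: "y \<in> H" and HX: "H \<subseteq> TX T (Xp x y)"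
  shows "Xsg E H = Xp x y"
proof
  fix e
  have xT: "x \<in> T" and yT: "y \<in> T" using HT xH yH by auto
  show "Xsg E H e = Xp x y e"
  proof (cases "e \<in> E")
    case False
    then show ?thesis using T_out[OF xT] by (simp add: Xsg_def Xp_def)
  next
    case True
    have xn: "x e \<noteq> Zero" and yn: "y e \<noteq> Zero" using T_in xT yT True by auto
    show ?thesis
    proof (cases "x e = y e")
      case eq: True
      have all: "\<forall>v\<in>H. v e = x e"
      proof
        fix v assume "v \<in> H"
        then have "le_sv (Xp x y) v" using HX by (auto simp: TX_def)
        then show "v e = x e" using eq xn by (simp add: le_sv_def Xp_def)
      qed
      show ?thesis
      proof (cases "x e")
        case Pos then show ?thesis using all eq True by (simp add: Xsg_def Xp_def)
      next
        case Neg
        then have "\<not> (\<forall>v\<in>H. v e = Pos)" using xH by force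
        then show ?thesis using all eq True Neg by (simp add: Xsg_def Xp_def)
      next
        case Zero then show ?thesis using xn by simp
      qed
    next
      case neq: False
      have "\<not> (\<forall>v\<in>H. v e = Pos)" "\<not> (\<forall>v\<in>H. v e = Neg)"
        using xH yH neq xn yn by (cases "x e"; cases "y e"; force)+
      then show ?thesis using neq by (simp add: Xsg_def Xp_def)
    qed
  qed
qed

lemma Xp_flip:
  assumes X: "X \<in> L" and u: "u \<in> TX T X"
  shows "Xp u (comp X (negv u)) = X"
proof
  fix e
  have uT: "u \<in> T" and le: "le_sv X u" using u by (auto simp: TX_def)
  show "Xp u (comp X (negv u)) e = X e"
  proof (cases "e \<in> E")
    case False then show ?thesis using L_out[OF X False] T_out[OF uT False]
      by (simp add: Xp_def comp_def negv_def)
  next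
    case True
    then have "u e \<noteq> Zero" using T_in uT by blast
    then show ?thesis using le by (cases "X e = Zero") (auto simp: Xp_def comp_def negv_def le_sv_def)
  qed
qed

lemma TX_good:
  assumes X: "X \<in> L"
  shows "antipodal_sg T (TX T X) \<and> gated_sg T (TX T X) \<and> Xsg E (TX T X) = X"
proof -
  obtain t0 where t0: "t0 \<in> T" using T_ne by blast
  have u0: "comp X t0 \<in> TX T X" using comp_T[OF X t0] by (auto simp: TX_def le_sv_def comp_def)
  have anti: "\<exists>y\<in>TX T X. conv_sg T {u, y} = TX T X" if u: "u \<in> TX T X" for u
  proof -
    have uT: "u \<in> T" using u by (simp add: TX_def)
    have u'T: "comp X (negv u) \<in> T" using FS_T[OF X uT] .
    have u'X: "comp X (negv u) \<in> TX T X" using u'T by (auto simp: TX_def le_sv_def comp_def)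
    have "conv_sg T {u, comp X (negv u)} = TX T X"
      using conv_Xp[OF uT u'T] Xp_flip[OF X u] by simp
    then show ?thesis using u'X by blast
  qed
  have A: "antipodal_sg T (TX T X)"
    unfolding antipodal_sg_def using u0 anti by (auto simp: TX_def)
  have X1: "Xsg E (TX T X) = X"
  proof -
    let ?u = "comp X t0"
    have "comp X (negv ?u) \<in> TX T X"
      using FS_T[OF X comp_T[OF X t0]] by (auto simp: TX_def le_sv_def comp_def)
    moreover have "TX T X \<subseteq> TX T (Xp ?u (comp X (negv ?u)))" using Xp_flip[OF X u0] by simp
    ultimately have "Xsg E (TX T X) = Xp ?u (comp X (negv ?u))"
      using Xsg_TX[of "TX T X" ?u "comp X (negv ?u)"] u0 by (auto simp: TX_def)
    then show ?thesis using Xp_flip[OF X u0] by simp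
  qed
  have G: "gated_sg T (TX T X)"
    unfolding gated_sg_def
  proof (intro conjI ballI)
    show "TX T X \<subseteq> T" by (auto simp: TX_def)
  next
    fix x assume xT: "x \<in> T"
    have gx: "comp X x \<in> TX T X" using comp_T[OF X xT] by (auto simp: TX_def le_sv_def comp_def)
    have "\<forall>y\<in>TX T X. \<exists>p. shortest_path T x y p \<and> comp X x \<in> set p"
    proof
      fix y assume y: "y \<in> TX T X"
      then have yT: "y \<in> T" and le: "le_sv X y" by (auto simp: TX_def)
      have "\<forall>f. comp X x f = x f \<or> comp X x f = y f" using le by (auto simp: comp_def le_sv_def)
      then show "\<exists>p. shortest_path T x y p \<and> comp X x \<in> set p"
        using interval_sp[OF xT yT comp_T[OF X xT]] by blast
    qed
    then show "\<exists>x'\<in>TX T X. \<forall>y\<in>TX T X. \<exists>p. shortest_path T x y p \<and> x' \<in> set p" using gx by blast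
  qed
  show ?thesis using A G X1 by blast
qed

lemma antipodal_L:
  assumes H: "antipodal_sg T H"
  shows "Xsg E H \<in> L \<and> H = TX T (Xsg E H)"
proof -
  have HT: "H \<subseteq> T" and Hne: "H \<noteq> {}" using H by (auto simp: antipodal_sg_def)
  obtain x where xH: "x \<in> H" using Hne by blast
  have ant: "\<forall>x\<in>H. \<exists>y\<in>H. conv_sg T {x, y} = H" using H by (simp add: antipodal_sg_def)
  obtain y where yH: "y \<in> H" and cxy: "conv_sg T {x, y} = H" using ant xH by blast
  have xT: "x \<in> T" and yT: "y \<in> T" using HT xH yH by auto
  have H1: "H = TX T (Xp x y)" using cxy conv_Xp[OF xT yT] by simp
  have XX: "Xsg E H = Xp x y" using Xsg_TX[OF HT xH yH] H1 by simp
  have HX: "H = TX T (Xsg E H)" using H1 XX by simp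
  have cl: "\<forall>t\<in>TX T (Xsg E H). comp (Xsg E H) (negv t) \<in> T"
  proof
    fix u assume "u \<in> TX T (Xsg E H)"
    then have uH: "u \<in> H" using HX by simp
    obtain u' where u'H: "u' \<in> H" and cuu: "conv_sg T {u, u'} = H" using ant uH by blast
    have uT: "u \<in> T" and u'T: "u' \<in> T" using HT uH u'H by auto
    have H2: "H = TX T (Xp u u')" using cuu conv_Xp[OF uT u'T] by simp
    have "Xsg E H = Xp u u'" using Xsg_TX[OF HT uH u'H] H2 by simp
    then have XE: "Xsg E H = Xp u u'" .
    have "comp (Xsg E H) (negv u) = u'"
    proof
      fix e show "comp (Xsg E H) (negv u) e = u' e"
      proof (cases "e \<in> E")
        case False then show ?thesis using T_out[OF uT False] T_out[OF u'T False]
          by (simp add: XE Xp_def comp_def negv_def)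
      next
        case True
        have "u e \<noteq> Zero" "u' e \<noteq> Zero" using T_in uT u'T True by auto
        then show ?thesis using two_val[of "u e" "u' e"]
          by (cases "u e = u' e") (auto simp: XE Xp_def comp_def negv_def)
      qed
    qed
    then show "comp (Xsg E H) (negv u) \<in> T" using u'T by simp
  qed
  have sv: "Xsg E H \<in> signvectors E" by (simp add: signvectors_def Xsg_def)
  have "TX T (Xsg E H) \<noteq> {}" using HX Hne by simp
  then have "Xsg E H \<in> L" using key[OF sv _ cl] by blast
  then show ?thesis using HX by blast
qed

lemma L_LG: "L = LG E T"
proof
  show "L \<subseteq> LG E T"
    using Lsv FS_T by (auto simp: LG_def)
next
  show "LG E T \<subseteq> L"
  proof
    fix X assume X: "X \<in> LG E T"
    then have sv: "X \<in> signvectors E" and cl: "\<forall>Y\<in>T. comp X (negv Y) \<in> T" by (auto simp: LG_def)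
    obtain t0 where t0: "t0 \<in> T" using T_ne by blast
    have "comp X (negv t0) \<in> TX T X" using cl t0 by (auto simp: TX_def le_sv_def comp_def)
    then have "TX T X \<noteq> {}" by blast
    moreover have "\<forall>t\<in>TX T X. comp X (negv t) \<in> T" using cl by (auto simp: TX_def)
    ultimately show "X \<in> L" using key[OF sv] by blast
  qed
qed

end

theorem mainTheorem2:
  fixes E :: "'e set" and L :: "('e \<Rightarrow> sign) set"
  assumes "finite E" and "E \<noteq> {}"
    and "L \<noteq> {}" and "L \<subseteq> signvectors E"
    and "COM E L" and "simple_svs E L"
  shows "L = {Xsg E H | H. antipodal_sg (topes E L) H}
       \<and> {Xsg E H | H. antipodal_sg (topes E L) H}
           = {Xsg E H | H. antipodal_sg (topes E L) H \<and> gated_sg (topes E L) H}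
       \<and> {Xsg E H | H. antipodal_sg (topes E L) H \<and> gated_sg (topes E L) H}
           = LG E (topes E L)
       \<and> (\<forall>H. antipodal_sg (topes E L) H \<longrightarrow> gated_sg (topes E L) H)"
proof -
  interpret scom E L using assms by (unfold_locales) auto
  let ?A = "{Xsg E H | H. antipodal_sg T H}"
  let ?AG = "{Xsg E H | H. antipodal_sg T H \<and> gated_sg T H}"
  have 1: "L \<subseteq> ?AG"
  proof
    fix X assume X: "X \<in> L"
    from TX_good[OF X] show "X \<in> ?AG" by force
  qed
  have 2: "?AG \<subseteq> ?A" by blast
  have 3: "?A \<subseteq> L" using antipodal_L by blast
  have 4: "\<forall>H. antipodal_sg T H \<longrightarrow> gated_sg T H"
  proof (intro allI impI)
    fix H assume H: "antipodal_sg T H"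
    from antipodal_L[OF H] have "Xsg E H \<in> L" "H = TX T (Xsg E H)" by auto
    then show "gated_sg T H" using TX_good by metis
  qed
  have e1: "L = ?A" using 1 2 3 by blast
  have e2: "?A = ?AG" using 1 2 3 by blast
  have e3: "?AG = LG E T" using 1 2 3 L_LG by blast
  show ?thesis using e1 e2 e3 4 by blast
qed


end
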